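(* Let $A$ and $B$ be finite groups. Then the direct product $A \times B$ is weakly-top if and only if both $A$ and $B$ are weakly-top. Likewise, $A \times B$ is top if and only if both $A$ and $B$ are top.
   Context: For a group $H$, $H'$ denotes its commutator subgroup. A finite group $G$ is weakly-top if $|H/H'| \leq |G/G'|$ for every proper subgroup $H<G$, and top if $|H/H'| < |G/G'|$ for every proper subgroup $H<G$. *)

theory Defs
  imports "HOL-Algebra.Algebra"
begin

definition abelianization_order :: "('a, 'b) monoid_scheme \<Rightarrow> 'a set \<Rightarrow> nat" where
  "abelianization_order G H = card (carrier ((G\<lparr>carrier := H\<rparr>) Mod (derived G H)))"

definition weakly_top :: "('a, 'b) monoid_scheme \<Rightarrow> bool" where
  "weakly_top G \<longleftrightarrow> (\<forall>H. subgroup H G \<and> H \<subset> carrier G \<longrightarrow>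
      abelianization_order G H \<le> abelianization_order G (carrier G))"

definition top_group :: "('a, 'b) monoid_scheme \<Rightarrow> bool" where
  "top_group G \<longleftrightarrow> (\<forall>H. subgroup H G \<and> H \<subset> carrier G \<longrightarrow>
      abelianization_order G H < abelianization_order G (carrier G))"

end

theory Submission
  imports Defs
begin

lemma ab_card:
  assumes "group G" "subgroup H G"
  shows "abelianization_order G H * card (derived G H) = card H"
proof -
  interpret group G by fact
  have d: "subgroup (derived G H) G"
    using derived_is_subgroup subgroup.subset assms(2) by blast
  have "derived G H \<subseteq> H" using derived_incl[OF subset_refl assms(2)] .
  hence s: "subgroup (derived G H) (G\<lparr>carrier := H\<rparr>)"
    using subgroup_incl d assms(2) by blast
  have g: "group (G\<lparr>carrier := H\<rparr>)"
    using subgroup.subgroup_is_group[OF assms(2) group_axioms] .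
  from group.lagrange[OF g s] show ?thesis
    unfolding abelianization_order_def FactGroup_def order_def by simp
qed

lemma ab_pos:
  assumes "group G" "subgroup H G" "finite H"
  shows "abelianization_order G H > 0"
proof -
  have "card H > 0" using assms subgroup.one_closed[OF assms(2)]
    using card_gt_0_iff by blast
  thus ?thesis using ab_card[OF assms(1,2)] by (metis gr0I mult_0)
qed

lemma hom_card:
  assumes "group_hom G H f" "finite (carrier G)"
  shows "card (carrier G) = card (f ` carrier G) * card (kernel G H f)"
proof -
  interpret group_hom G H f by fact
  have U: "carrier G = (\<Union>y\<in>f ` carrier G. {x\<in>carrier G. f x = y})" by auto
  have "card (carrier G) = (\<Sum>y\<in>f ` carrier G. card {x\<in>carrier G. f x = y})"
    by (subst U, rule card_UN_disjoint) (use assms(2) in auto)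
  also have "\<dots> = (\<Sum>y\<in>f ` carrier G. card (kernel G H f))"
  proof (rule sum.cong[OF refl])
    fix y assume "y \<in> f ` carrier G"
    then obtain x0 where x0: "x0 \<in> carrier G" "f x0 = y" by auto
    have "bij_betw (\<lambda>k. k \<otimes>\<^bsub>G\<^esub> x0) (kernel G H f) {x\<in>carrier G. f x = y}"
    proof (rule bij_betwI[where g = "\<lambda>x. x \<otimes>\<^bsub>G\<^esub> inv\<^bsub>G\<^esub> x0"])
      show "(\<lambda>k. k \<otimes>\<^bsub>G\<^esub> x0) \<in> kernel G H f \<rightarrow> {x \<in> carrier G. f x = y}"
        using x0 by (auto simp: kernel_def)
      show "(\<lambda>x. x \<otimes>\<^bsub>G\<^esub> inv\<^bsub>G\<^esub> x0) \<in> {x \<in> carrier G. f x = y} \<rightarrow> kernel G H f"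
        using x0 by (auto simp: kernel_def)
      show "x \<otimes>\<^bsub>G\<^esub> x0 \<otimes>\<^bsub>G\<^esub> inv\<^bsub>G\<^esub> x0 = x" if "x \<in> kernel G H f" for x
        using that x0 by (auto simp: kernel_def G.m_assoc)
      show "x \<otimes>\<^bsub>G\<^esub> inv\<^bsub>G\<^esub> x0 \<otimes>\<^bsub>G\<^esub> x0 = x" if "x \<in> {x \<in> carrier G. f x = y}" for x
        using that x0 by (auto simp: G.m_assoc)
    qed
    thus "card {x\<in>carrier G. f x = y} = card (kernel G H f)"
      by (simp add: bij_betw_same_card)
  qed
  also have "\<dots> = card (f ` carrier G) * card (kernel G H f)" by simp
  finally show ?thesis .
qed

lemma inl_hom:
  assumes "group A" "group B"
  shows "group_hom A (A \<times>\<times> B) (\<lambda>a. (a, \<one>\<^bsub>B\<^esub>))"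
proof -
  interpret A: group A by fact
  interpret B: group B by fact
  show ?thesis
    by (rule group_hom.intro[OF assms(1) DirProd_group[OF assms]], unfold group_hom_axioms_def)
       (auto intro!: homI)
qed

lemma inr_hom:
  assumes "group A" "group B"
  shows "group_hom B (A \<times>\<times> B) (\<lambda>b. (\<one>\<^bsub>A\<^esub>, b))"
proof -
  interpret A: group A by fact
  interpret B: group B by fact
  show ?thesis
    by (rule group_hom.intro[OF assms(2) DirProd_group[OF assms]], unfold group_hom_axioms_def)
       (auto intro!: homI)
qed

lemma snd_hom:
  assumes "group A" "group B" "subgroup S (A \<times>\<times> B)"
  shows "group_hom ((A \<times>\<times> B)\<lparr>carrier := S\<rparr>) B snd"
proof -
  interpret A: group A by fact
  interpret B: group B by fact
  interpret C: group "A \<times>\<times> B" using DirProd_group[OF assms(1,2)] .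
  have g: "group ((A \<times>\<times> B)\<lparr>carrier := S\<rparr>)"
    using subgroup.subgroup_is_group[OF assms(3) C.group_axioms] .
  show ?thesis
    using subgroup.subset[OF assms(3)]
    by (intro group_hom.intro[OF g assms(2)], unfold group_hom_axioms_def)
       (auto intro!: homI simp: mult_DirProd')
qed

lemma derived_prod:
  assumes "group A" "group B" "subgroup H1 A" "subgroup H2 B"
  shows "derived (A \<times>\<times> B) (H1 \<times> H2) = derived A H1 \<times> derived B H2"
proof -
  interpret A: group A by fact
  interpret B: group B by fact
  interpret C: group "A \<times>\<times> B" using DirProd_group[OF assms(1,2)] .
  have s1: "H1 \<subseteq> carrier A" and s2: "H2 \<subseteq> carrier B"
    using assms(3,4) subgroup.subset by auto
  have sub: "subgroup (derived A H1 \<times> derived B H2) (A \<times>\<times> B)"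
    using DirProd_subgroups[OF assms(1) A.derived_is_subgroup[OF s1] assms(2) B.derived_is_subgroup[OF s2]] .
  have "derived_set (A \<times>\<times> B) (H1 \<times> H2) \<subseteq> derived A H1 \<times> derived B H2"
  proof
    fix x assume "x \<in> derived_set (A \<times>\<times> B) (H1 \<times> H2)"
    then obtain a1 b1 a2 b2 where h: "a1 \<in> H1" "b1 \<in> H2" "a2 \<in> H1" "b2 \<in> H2"
      "x = (a1, b1) \<otimes>\<^bsub>A \<times>\<times> B\<^esub> (a2, b2) \<otimes>\<^bsub>A \<times>\<times> B\<^esub> inv\<^bsub>A \<times>\<times> B\<^esub> (a1, b1) \<otimes>\<^bsub>A \<times>\<times> B\<^esub> inv\<^bsub>A \<times>\<times> B\<^esub> (a2, b2)"
      by auto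
    have c: "a1 \<in> carrier A" "a2 \<in> carrier A" "b1 \<in> carrier B" "b2 \<in> carrier B"
      using h s1 s2 by auto
    have "x = (a1 \<otimes>\<^bsub>A\<^esub> a2 \<otimes>\<^bsub>A\<^esub> inv\<^bsub>A\<^esub> a1 \<otimes>\<^bsub>A\<^esub> inv\<^bsub>A\<^esub> a2,
               b1 \<otimes>\<^bsub>B\<^esub> b2 \<otimes>\<^bsub>B\<^esub> inv\<^bsub>B\<^esub> b1 \<otimes>\<^bsub>B\<^esub> inv\<^bsub>B\<^esub> b2)"
      using h(5) c by (simp add: inv_DirProd[OF assms(1,2)])
    moreover have "a1 \<otimes>\<^bsub>A\<^esub> a2 \<otimes>\<^bsub>A\<^esub> inv\<^bsub>A\<^esub> a1 \<otimes>\<^bsub>A\<^esub> inv\<^bsub>A\<^esub> a2 \<in> derived A H1"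
      unfolding derived_def using h by (intro generate.incl) blast
    moreover have "b1 \<otimes>\<^bsub>B\<^esub> b2 \<otimes>\<^bsub>B\<^esub> inv\<^bsub>B\<^esub> b1 \<otimes>\<^bsub>B\<^esub> inv\<^bsub>B\<^esub> b2 \<in> derived B H2"
      unfolding derived_def using h by (intro generate.incl) blast
    ultimately show "x \<in> derived A H1 \<times> derived B H2" by simp
  qed
  hence le: "derived (A \<times>\<times> B) (H1 \<times> H2) \<subseteq> derived A H1 \<times> derived B H2"
    unfolding derived_def[of "A \<times>\<times> B"] using C.generate_subgroup_incl sub by blast
  have D: "subgroup (derived (A \<times>\<times> B) (H1 \<times> H2)) (A \<times>\<times> B)"
    using C.derived_is_subgroup s1 s2 by (metis carrier_DirProd Sigma_mono)
  have L: "(\<lambda>a. (a, \<one>\<^bsub>B\<^esub>)) ` derived A H1 \<subseteq> derived (A \<times>\<times> B) (H1 \<times> H2)"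
  proof -
    have "(\<lambda>a. (a, \<one>\<^bsub>B\<^esub>)) ` derived A H1 = derived (A \<times>\<times> B) ((\<lambda>a. (a, \<one>\<^bsub>B\<^esub>)) ` H1)"
      using group_hom.derived_img[OF inl_hom[OF assms(1,2)] s1] by simp
    also have "\<dots> \<subseteq> derived (A \<times>\<times> B) (H1 \<times> H2)"
      using subgroup.one_closed[OF assms(4)] by (intro C.mono_derived) auto
    finally show ?thesis .
  qed
  have R: "(\<lambda>b. (\<one>\<^bsub>A\<^esub>, b)) ` derived B H2 \<subseteq> derived (A \<times>\<times> B) (H1 \<times> H2)"
  proof -
    have "(\<lambda>b. (\<one>\<^bsub>A\<^esub>, b)) ` derived B H2 = derived (A \<times>\<times> B) ((\<lambda>b. (\<one>\<^bsub>A\<^esub>, b)) ` H2)"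
      using group_hom.derived_img[OF inr_hom[OF assms(1,2)] s2] by simp
    also have "\<dots> \<subseteq> derived (A \<times>\<times> B) (H1 \<times> H2)"
      using subgroup.one_closed[OF assms(3)] by (intro C.mono_derived) auto
    finally show ?thesis .
  qed
  have "derived A H1 \<times> derived B H2 \<subseteq> derived (A \<times>\<times> B) (H1 \<times> H2)"
  proof safe
    fix x y assume x: "x \<in> derived A H1" and y: "y \<in> derived B H2"
    have xc: "x \<in> carrier A" using A.derived_in_carrier[OF s1] x by blast
    have yc: "y \<in> carrier B" using B.derived_in_carrier[OF s2] y by blast
    have "(x, \<one>\<^bsub>B\<^esub>) \<otimes>\<^bsub>A \<times>\<times> B\<^esub> (\<one>\<^bsub>A\<^esub>, y) \<in> derived (A \<times>\<times> B) (H1 \<times> H2)"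
      using L R x y subgroup.m_closed[OF D] by blast
    thus "(x, y) \<in> derived (A \<times>\<times> B) (H1 \<times> H2)" using xc yc by simp
  qed
  with le show ?thesis by blast
qed

lemma ab_prod:
  assumes "group A" "group B" "subgroup H1 A" "subgroup H2 B" "finite H1" "finite H2"
  shows "abelianization_order (A \<times>\<times> B) (H1 \<times> H2) = abelianization_order A H1 * abelianization_order B H2"
proof -
  have S: "subgroup (H1 \<times> H2) (A \<times>\<times> B)" using DirProd_subgroups assms by blast
  have e: "abelianization_order (A \<times>\<times> B) (H1 \<times> H2) * (card (derived A H1) * card (derived B H2))
     = card H1 * card H2"
    using ab_card[OF DirProd_group[OF assms(1,2)] S] derived_prod[OF assms(1-4)]
    by (simp add: card_cartesian_product)
  have "card H1 * card H2 = (abelianization_order A H1 * abelianization_order B H2) * (card (derived A H1) * card (derived B H2))"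
    using ab_card[OF assms(1,3)] ab_card[OF assms(2,4)] by (simp add: algebra_simps)
  moreover have "card (derived A H1) * card (derived B H2) > 0"
  proof -
    have "finite (derived A H1)" using group.derived_incl[OF assms(1) subset_refl assms(3)] assms(5)
      finite_subset by blast
    moreover have "\<one>\<^bsub>A\<^esub> \<in> derived A H1" unfolding derived_def by (rule generate.one)
    moreover have "finite (derived B H2)" using group.derived_incl[OF assms(2) subset_refl assms(4)] assms(6)
      finite_subset by blast
    moreover have "\<one>\<^bsub>B\<^esub> \<in> derived B H2" unfolding derived_def by (rule generate.one)
    ultimately show ?thesis by (auto simp: card_gt_0_iff)
  qed
  ultimately show ?thesis using e by simp
qed

lemma derived_card_pos:
  assumes "group G" "subgroup H G" "finite H"
  shows "card (derived G H) > 0"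
proof -
  have "finite (derived G H)" using group.derived_incl[OF assms(1) subset_refl assms(2)] assms(3)
    finite_subset by blast
  moreover have "\<one>\<^bsub>G\<^esub> \<in> derived G H" unfolding derived_def by (rule generate.one)
  ultimately show ?thesis by (auto simp: card_gt_0_iff)
qed

lemma snd_hom0:
  assumes "group A" "group B"
  shows "group_hom (A \<times>\<times> B) B snd"
proof -
  interpret A: group A by fact
  interpret B: group B by fact
  show ?thesis
    by (intro group_hom.intro[OF DirProd_group[OF assms] assms(2)], unfold group_hom_axioms_def)
       (auto intro!: homI simp: mult_DirProd')
qed

lemma sub_bound:
  assumes "group A" "group B" "finite (carrier A)" "finite (carrier B)"
    and S: "subgroup S (A \<times>\<times> B)"
  defines "N \<equiv> {a \<in> carrier A. (a, \<one>\<^bsub>B\<^esub>) \<in> S}"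
  shows "subgroup N A" "subgroup (snd ` S) B"
    "abelianization_order (A \<times>\<times> B) S \<le> abelianization_order B (snd ` S) * abelianization_order A N"
    "N = carrier A \<Longrightarrow> snd ` S = carrier B \<Longrightarrow> S = carrier (A \<times>\<times> B)"
proof -
  interpret A: group A by fact
  interpret B: group B by fact
  interpret C: group "A \<times>\<times> B" using DirProd_group[OF assms(1,2)] .
  interpret S: subgroup S "A \<times>\<times> B" by fact
  have Ssub: "S \<subseteq> carrier A \<times> carrier B" using S.subset by simp
  have finS: "finite S" using Ssub assms(3,4) finite_subset by blast
  show NA: "subgroup N A"
  proof (rule subgroup.intro)
    show "N \<subseteq> carrier A" unfolding N_def by auto
    show "x \<otimes>\<^bsub>A\<^esub> y \<in> N" if "x \<in> N" "y \<in> N" for x y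
    proof -
      have "(x, \<one>\<^bsub>B\<^esub>) \<otimes>\<^bsub>A \<times>\<times> B\<^esub> (y, \<one>\<^bsub>B\<^esub>) \<in> S" using that unfolding N_def by blast
      thus ?thesis using that unfolding N_def by simp
    qed
    show "\<one>\<^bsub>A\<^esub> \<in> N" unfolding N_def using S.one_closed by simp
    show "inv\<^bsub>A\<^esub> x \<in> N" if "x \<in> N" for x
    proof -
      have "inv\<^bsub>A \<times>\<times> B\<^esub> (x, \<one>\<^bsub>B\<^esub>) \<in> S" using that unfolding N_def by blast
      thus ?thesis using that unfolding N_def by (simp add: inv_DirProd[OF assms(1,2)])
    qed
  qed
  have sh: "group_hom (A \<times>\<times> B) B snd" using snd_hom0[OF assms(1,2)] .
  show S2: "subgroup (snd ` S) B" using group_hom.subgroup_img_is_subgroup[OF sh S] .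
  have Ksub: "subgroup (N \<times> {\<one>\<^bsub>B\<^esub>}) (A \<times>\<times> B)"
    using DirProd_subgroups[OF assms(1) NA assms(2) B.triv_subgroup] .
  have ker: "kernel ((A \<times>\<times> B)\<lparr>carrier := S\<rparr>) B snd = N \<times> {\<one>\<^bsub>B\<^esub>}"
    using Ssub unfolding kernel_def N_def by auto
  have cS: "card S = card (snd ` S) * card (N \<times> {\<one>\<^bsub>B\<^esub>})"
    using hom_card[OF snd_hom[OF assms(1,2) S]] finS ker by simp
  define D where "D = derived (A \<times>\<times> B) S"
  have Dsub: "subgroup D (A \<times>\<times> B)" unfolding D_def using C.derived_is_subgroup S.subset by blast
  have DS: "D \<subseteq> S" unfolding D_def using C.derived_incl[OF subset_refl S] .
  have finD: "finite D" using DS finS finite_subset by blast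
  define KD where "KD = kernel ((A \<times>\<times> B)\<lparr>carrier := D\<rparr>) B snd"
  have cD: "card D = card (snd ` D) * card KD"
    using hom_card[OF snd_hom[OF assms(1,2) Dsub]] finD unfolding KD_def by simp
  have sD: "snd ` D = derived B (snd ` S)"
    unfolding D_def using group_hom.derived_img[OF sh S.subset] by simp
  have KDsup: "derived (A \<times>\<times> B) (N \<times> {\<one>\<^bsub>B\<^esub>}) \<subseteq> KD"
  proof -
    have "N \<times> {\<one>\<^bsub>B\<^esub>} \<subseteq> S" unfolding N_def by auto
    hence "derived (A \<times>\<times> B) (N \<times> {\<one>\<^bsub>B\<^esub>}) \<subseteq> D" unfolding D_def by (rule C.mono_derived)
    moreover have "derived (A \<times>\<times> B) (N \<times> {\<one>\<^bsub>B\<^esub>}) \<subseteq> N \<times> {\<one>\<^bsub>B\<^esub>}"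
      using C.derived_incl[OF subset_refl Ksub] .
    ultimately show ?thesis unfolding KD_def kernel_def by auto
  qed
  have finKD: "finite KD" unfolding KD_def kernel_def using finD by simp
  have finN: "finite N" using assms(3) unfolding N_def by simp
  have finK: "finite (N \<times> {\<one>\<^bsub>B\<^esub>})" using finN by simp
  have finS2: "finite (snd ` S)" using finS by simp
  define cK' where "cK' = card (derived (A \<times>\<times> B) (N \<times> {\<one>\<^bsub>B\<^esub>}))"
  define cS2' where "cS2' = card (derived B (snd ` S))"
  have le1: "cS2' * cK' \<le> card D"
    unfolding cD cK'_def cS2'_def sD using card_mono[OF finKD KDsup] by simp
  have pos: "cS2' * cK' > 0"
    unfolding cK'_def cS2'_def
    using derived_card_pos[OF C.group_axioms Ksub finK] derived_card_pos[OF assms(2) S2 finS2] by simp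
  have one: "abelianization_order B {\<one>\<^bsub>B\<^esub>} = 1"
    using ab_card[OF assms(2) B.triv_subgroup] by simp
  have aK: "abelianization_order (A \<times>\<times> B) (N \<times> {\<one>\<^bsub>B\<^esub>}) = abelianization_order A N"
    using ab_prod[OF assms(1,2) NA B.triv_subgroup finN] one by simp
  have e1: "abelianization_order (A \<times>\<times> B) S * card D = card S"
    unfolding D_def using ab_card[OF C.group_axioms S] .
  have e2: "abelianization_order B (snd ` S) * cS2' = card (snd ` S)"
    unfolding cS2'_def using ab_card[OF assms(2) S2] .
  have e3: "abelianization_order A N * cK' = card (N \<times> {\<one>\<^bsub>B\<^esub>})"
    unfolding cK'_def using ab_card[OF C.group_axioms Ksub] aK by simp
  have "abelianization_order (A \<times>\<times> B) S * (cS2' * cK') \<le> abelianization_order (A \<times>\<times> B) S * card D"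
    using le1 by simp
  also have "\<dots> = (abelianization_order B (snd ` S) * abelianization_order A N) * (cS2' * cK')"
    using e1 e2 e3 cS by (simp add: algebra_simps)
  finally show "abelianization_order (A \<times>\<times> B) S \<le> abelianization_order B (snd ` S) * abelianization_order A N"
    using pos by simp
  show "S = carrier (A \<times>\<times> B)" if NA': "N = carrier A" and SB: "snd ` S = carrier B"
  proof
    show "S \<subseteq> carrier (A \<times>\<times> B)" by (rule S.subset)
    show "carrier (A \<times>\<times> B) \<subseteq> S"
    proof
      fix x assume "x \<in> carrier (A \<times>\<times> B)"
      then obtain a b where a: "a \<in> carrier A" and b: "b \<in> carrier B" and x: "x = (a, b)" by auto
      then obtain a0 where a0: "(a0, b) \<in> S" using SB by force
      have a0c: "a0 \<in> carrier A" using a0 Ssub by auto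
      have "a \<otimes>\<^bsub>A\<^esub> inv\<^bsub>A\<^esub> a0 \<in> N" using NA' a a0c by simp
      hence "(a \<otimes>\<^bsub>A\<^esub> inv\<^bsub>A\<^esub> a0, \<one>\<^bsub>B\<^esub>) \<in> S" unfolding N_def by simp
      hence "(a \<otimes>\<^bsub>A\<^esub> inv\<^bsub>A\<^esub> a0, \<one>\<^bsub>B\<^esub>) \<otimes>\<^bsub>A \<times>\<times> B\<^esub> (a0, b) \<in> S" using a0 by blast
      thus "x \<in> S" unfolding x using a a0c b by (simp add: A.m_assoc)
    qed
  qed
qed

lemma prod_lt:
  fixes p q P Q :: nat
  assumes "p \<le> P" "q \<le> Q" "p < P \<or> q < Q" "0 < P" "0 < Q"
  shows "p * q < P * Q"
  using assms(3)
proof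
  assume h: "p < P"
  have "p * q \<le> p * Q" using assms(2) by simp
  also have "\<dots> < P * Q" using h assms(5) by simp
  finally show ?thesis .
next
  assume h: "q < Q"
  have "p * q \<le> P * q" using assms(1) by simp
  also have "\<dots> < P * Q" using h assms(4) by simp
  finally show ?thesis .
qed

theorem lemma2p3:
  fixes A :: "('a, 'c) monoid_scheme" and B :: "('b, 'd) monoid_scheme"
  assumes "group A" and "group B"
    and "finite (carrier A)" and "finite (carrier B)"
  shows "(weakly_top (A \<times>\<times> B) \<longleftrightarrow> weakly_top A \<and> weakly_top B)
       \<and> (top_group (A \<times>\<times> B) \<longleftrightarrow> top_group A \<and> top_group B)"
proof -
  interpret A: group A by fact
  interpret B: group B by fact
  interpret C: group "A \<times>\<times> B" using DirProd_group[OF assms(1,2)] .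
  define aA where "aA = abelianization_order A (carrier A)"
  define aB where "aB = abelianization_order B (carrier B)"
  have aC: "abelianization_order (A \<times>\<times> B) (carrier (A \<times>\<times> B)) = aA * aB"
    unfolding aA_def aB_def carrier_DirProd
    using ab_prod[OF assms(1,2) A.subgroup_self B.subgroup_self assms(3,4)] .
  have aApos: "aA > 0" unfolding aA_def using ab_pos[OF assms(1) A.subgroup_self assms(3)] .
  have aBpos: "aB > 0" unfolding aB_def using ab_pos[OF assms(2) B.subgroup_self assms(4)] .
  have neA: "carrier A \<noteq> {}" and neB: "carrier B \<noteq> {}" by auto
  have L: "subgroup (H \<times> carrier B) (A \<times>\<times> B) \<and> H \<times> carrier B \<subset> carrier (A \<times>\<times> B)
      \<and> abelianization_order (A \<times>\<times> B) (H \<times> carrier B) = abelianization_order A H * aB"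
    if "subgroup H A" "H \<subset> carrier A" for H
  proof (intro conjI)
    show "subgroup (H \<times> carrier B) (A \<times>\<times> B)"
      using DirProd_subgroups[OF assms(1) that(1) assms(2) B.subgroup_self] .
    show "H \<times> carrier B \<subset> carrier (A \<times>\<times> B)" using that(2) neB by auto
    show "abelianization_order (A \<times>\<times> B) (H \<times> carrier B) = abelianization_order A H * aB"
      unfolding aB_def using ab_prod[OF assms(1,2) that(1) B.subgroup_self _ assms(4)] that(2) assms(3)
      finite_subset by blast
  qed
  have R: "subgroup (carrier A \<times> H) (A \<times>\<times> B) \<and> carrier A \<times> H \<subset> carrier (A \<times>\<times> B)
      \<and> abelianization_order (A \<times>\<times> B) (carrier A \<times> H) = aA * abelianization_order B H"
    if "subgroup H B" "H \<subset> carrier B" for H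
  proof (intro conjI)
    show "subgroup (carrier A \<times> H) (A \<times>\<times> B)"
      using DirProd_subgroups[OF assms(1) A.subgroup_self assms(2) that(1)] .
    show "carrier A \<times> H \<subset> carrier (A \<times>\<times> B)" using that(2) neA by auto
    show "abelianization_order (A \<times>\<times> B) (carrier A \<times> H) = aA * abelianization_order B H"
      unfolding aA_def using ab_prod[OF assms(1,2) A.subgroup_self that(1) assms(3)] that(2) assms(4)
      finite_subset by blast
  qed
  have leA: "abelianization_order A H \<le> aA" if "subgroup H A" "weakly_top A" for H
  proof (cases "H = carrier A")
    case True thus ?thesis unfolding aA_def by simp
  next
    case False
    hence "H \<subset> carrier A" using subgroup.subset[OF that(1)] by auto
    thus ?thesis using that unfolding weakly_top_def aA_def by blast
  qed
  have leB: "abelianization_order B H \<le> aB" if "subgroup H B" "weakly_top B" for H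
  proof (cases "H = carrier B")
    case True thus ?thesis unfolding aB_def by simp
  next
    case False
    hence "H \<subset> carrier B" using subgroup.subset[OF that(1)] by auto
    thus ?thesis using that unfolding weakly_top_def aB_def by blast
  qed
  have top_wt: "weakly_top G" if "top_group G" for G :: "('e, 'f) monoid_scheme"
    using that unfolding top_group_def weakly_top_def by (meson less_imp_le)
  have W1: "weakly_top (A \<times>\<times> B) \<longleftrightarrow> weakly_top A \<and> weakly_top B"
  proof safe
    assume W: "weakly_top (A \<times>\<times> B)"
    show "weakly_top A" unfolding weakly_top_def
    proof (intro allI impI)
      fix H assume H0: "subgroup H A \<and> H \<subset> carrier A"
      note H = conjunct1[OF H0] conjunct2[OF H0]
      have "abelianization_order A H * aB \<le> aA * aB"
        using L[OF H] W aC unfolding weakly_top_def by metis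
      thus "abelianization_order A H \<le> abelianization_order A (carrier A)"
        using aBpos unfolding aA_def by simp
    qed
    show "weakly_top B" unfolding weakly_top_def
    proof (intro allI impI)
      fix H assume H0: "subgroup H B \<and> H \<subset> carrier B"
      note H = conjunct1[OF H0] conjunct2[OF H0]
      have "aA * abelianization_order B H \<le> aA * aB"
        using R[OF H] W aC unfolding weakly_top_def by metis
      thus "abelianization_order B H \<le> abelianization_order B (carrier B)"
        using aApos unfolding aB_def by simp
    qed
  next
    assume WA: "weakly_top A" and WB: "weakly_top B"
    show "weakly_top (A \<times>\<times> B)" unfolding weakly_top_def
    proof (intro allI impI)
      fix S assume S0: "subgroup S (A \<times>\<times> B) \<and> S \<subset> carrier (A \<times>\<times> B)"
      note S = conjunct1[OF S0] conjunct2[OF S0]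
      note sb = sub_bound[OF assms S(1)]
      have "abelianization_order (A \<times>\<times> B) S \<le> aB * aA"
        using sb(3) leA[OF sb(1) WA] leB[OF sb(2) WB] mult_le_mono order_trans by blast
      thus "abelianization_order (A \<times>\<times> B) S \<le> abelianization_order (A \<times>\<times> B) (carrier (A \<times>\<times> B))"
        using aC by (simp add: mult.commute)
    qed
  qed
  have T1: "top_group (A \<times>\<times> B) \<longleftrightarrow> top_group A \<and> top_group B"
  proof safe
    assume W: "top_group (A \<times>\<times> B)"
    show "top_group A" unfolding top_group_def
    proof (intro allI impI)
      fix H assume H0: "subgroup H A \<and> H \<subset> carrier A"
      note H = conjunct1[OF H0] conjunct2[OF H0]
      have "abelianization_order A H * aB < aA * aB"
        using L[OF H] W aC unfolding top_group_def by metis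
      thus "abelianization_order A H < abelianization_order A (carrier A)"
        using aBpos unfolding aA_def by simp
    qed
    show "top_group B" unfolding top_group_def
    proof (intro allI impI)
      fix H assume H0: "subgroup H B \<and> H \<subset> carrier B"
      note H = conjunct1[OF H0] conjunct2[OF H0]
      have "aA * abelianization_order B H < aA * aB"
        using R[OF H] W aC unfolding top_group_def by metis
      thus "abelianization_order B H < abelianization_order B (carrier B)"
        using aApos unfolding aB_def by simp
    qed
  next
    assume TA: "top_group A" and TB: "top_group B"
    have WA: "weakly_top A" using top_wt[OF TA] .
    have WB: "weakly_top B" using top_wt[OF TB] .
    show "top_group (A \<times>\<times> B)" unfolding top_group_def
    proof (intro allI impI)
      fix S assume S0: "subgroup S (A \<times>\<times> B) \<and> S \<subset> carrier (A \<times>\<times> B)"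
      note S = conjunct1[OF S0] conjunct2[OF S0]
      note sb = sub_bound[OF assms S(1)]
      define N where "N = {a \<in> carrier A. (a, \<one>\<^bsub>B\<^esub>) \<in> S}"
      have NA: "subgroup N A" using sb(1) unfolding N_def .
      have l1: "abelianization_order B (snd ` S) \<le> aB" using leB[OF sb(2) WB] .
      have l2: "abelianization_order A N \<le> aA" using leA[OF NA WA] .
      have strict: "abelianization_order B (snd ` S) < aB \<or> abelianization_order A N < aA"
      proof (cases "snd ` S = carrier B")
        case True
        have "N \<noteq> carrier A" using sb(4) True S(2) unfolding N_def by blast
        hence "N \<subset> carrier A" using subgroup.subset[OF NA] by auto
        hence "abelianization_order A N < aA" using TA NA unfolding top_group_def aA_def by blast
        thus ?thesis ..
      next
        case False
        hence "snd ` S \<subset> carrier B" using subgroup.subset[OF sb(2)] by auto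
        hence "abelianization_order B (snd ` S) < aB" using TB sb(2) unfolding top_group_def aB_def by blast
        thus ?thesis ..
      qed
      have "abelianization_order (A \<times>\<times> B) S < aB * aA"
        using sb(3)[folded N_def] prod_lt[OF l1 l2 strict aBpos aApos] by linarith
      thus "abelianization_order (A \<times>\<times> B) S < abelianization_order (A \<times>\<times> B) (carrier (A \<times>\<times> B))"
        using aC by (simp add: mult.commute)
    qed
  qed
  show ?thesis using W1 T1 by blast
qed

end
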